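(* Assume $\alpha_i>0$, $\alpha_i+u>0$, $\alpha_i+v>0$ for all $i$, and $u+v>0$. Let $\mathcal P$ be the horizontal path with vertices $(k+j,k)$, $0\le j\le N$, and labels $\boldsymbol\beta=(\beta_1,\dots,\beta_N)$, $\beta_j=\alpha_{k+j}$ (indices mod $N$). Then the probability density $\mathrm P^{\mathcal P}_{\mathrm{LG}}$ on $\mathbb R^N$ coincides with $\mathrm P^{\boldsymbol\beta,u,v}_{\mathrm{stat\,LG}}$.
   Context: With $f_\theta(x)=e^{-\theta x-e^{-x}}$, for $\boldsymbol\lambda=(\lambda_i^{(j)})_{i\in\{1,2\},0\le j\le N}\in\mathbb R^{2N+2}$ define $$\mathrm{wt}^{\mathcal{GP}}(\boldsymbol\lambda)=e^{-u(\lambda_1^{(0)}-\lambda_2^{(0)})-v(\lambda_1^{(N)}-\lambda_2^{(N)})}\prod_{j=1}^N\Big[\prod_{i=1}^2f_{\beta_j}(\lambda_i^{(j)}-\lambda_i^{(j-1)})\Big]e^{-e^{-(\lambda_1^{(j-1)}-\lambda_2^{(j)})}},$$ $\mathrm{wt}^{\mathcal P}(\boldsymbol\lambda_1)=\int_{\mathbb R^{N+1}}\mathrm{wt}^{\mathcal{GP}}(\boldsymbol\lambda_1,\boldsymbol\lambda_2)d\boldsymbol\lambda_2$, $Z=\int_{\mathbb R^N}\mathrm{wt}^{\mathcal P}(\boldsymbol\lambda_1)d\lambda_1^{(1)}\cdots d\lambda_1^{(N)}$ for fixed $\lambda_1^{(0)}$ (finite and independent of $\lambda_1^{(0)}$ when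 $u+v>0$), and $\mathrm P^{\mathcal P}_{\mathrm{LG}}(\mathbf L_1)=\mathrm{wt}^{\mathcal P}(\boldsymbol\lambda_1)/Z$ with $L_1(j)=\lambda_1^{(j)}-\lambda_1^{(0)}$. $\mathbb P^{\boldsymbol\beta,\boldsymbol\beta}_{\mathrm{LGRW}}$ is the density of two independent walks $\mathbf L_1,\mathbf L_2\in\mathbb R^N$, $L_i(0)=0$, with independent increments $L_i(j)-L_i(j-1)$ of density $f_{\beta_j}/\Gamma(\beta_j)$. $V(\mathbf L)=\big(\sum_{j=1}^Ne^{L_2(j)-L_1(j-1)}\big)^{-(u+v)}e^{-v(L_1(N)-L_2(N))}$, $\mathbb P^{\boldsymbol\beta,u,v}_{\mathrm{stat\,LG}}=V\mathbb P^{\boldsymbol\beta,\boldsymbol\beta}_{\mathrm{LGRW}}/\mathbb E^{\boldsymbol\beta,\boldsymbol\beta}_{\mathrm{LGRW}}[V]$, and $\mathrm P^{\boldsymbol\beta,u,v}_{\mathrm{stat\,LG}}$ is the marginal density of $\mathbf L_1$. *)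

theory Defs
  imports "HOL-Analysis.Analysis"
begin

definition fLG :: "real \<Rightarrow> real \<Rightarrow> real" where
  "fLG \<theta> x = exp (- \<theta> * x - exp (- x))"

text \<open>Points of R^(N+1) are functions nat => real read on the indices 0..N
  (lambda^(0),...,lambda^(N)); points of R^N are functions read on 1..N.\<close>

definition wtGP :: "nat \<Rightarrow> (nat \<Rightarrow> real) \<Rightarrow> real \<Rightarrow> real \<Rightarrow>
    (nat \<Rightarrow> real) \<Rightarrow> (nat \<Rightarrow> real) \<Rightarrow> real" where
  "wtGP N \<beta> u v l1 l2 =
     exp (- u * (l1 0 - l2 0) - v * (l1 N - l2 N)) *
     (\<Prod>j\<in>{1..N}. fLG (\<beta> j) (l1 j - l1 (j - 1)) * fLG (\<beta> j) (l2 j - l2 (j - 1))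
                     * exp (- exp (- (l1 (j - 1) - l2 j))))"

definition wtP :: "nat \<Rightarrow> (nat \<Rightarrow> real) \<Rightarrow> real \<Rightarrow> real \<Rightarrow> (nat \<Rightarrow> real) \<Rightarrow> ennreal" where
  "wtP N \<beta> u v l1 =
     (\<integral>\<^sup>+ l2. ennreal (wtGP N \<beta> u v l1 l2) \<partial>(PiM {..N} (\<lambda>_. lborel)))"

definition ZLG :: "nat \<Rightarrow> (nat \<Rightarrow> real) \<Rightarrow> real \<Rightarrow> real \<Rightarrow> real \<Rightarrow> ennreal" where
  "ZLG N \<beta> u v a =
     (\<integral>\<^sup>+ l. wtP N \<beta> u v (l(0 := a)) \<partial>(PiM {1..N} (\<lambda>_. lborel)))"

definition PLG :: "nat \<Rightarrow> (nat \<Rightarrow> real) \<Rightarrow> real \<Rightarrow> real \<Rightarrow> real \<Rightarrow> (nat \<Rightarrow> real) \<Rightarrow> ennreal" where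
  "PLG N \<beta> u v a L =
     wtP N \<beta> u v (\<lambda>j. if j = 0 then a else a + L j) / ZLG N \<beta> u v a"

definition path0 :: "(nat \<Rightarrow> real) \<Rightarrow> nat \<Rightarrow> real" where
  "path0 L j = (if j = 0 then 0 else L j)"

definition LGRW :: "nat \<Rightarrow> (nat \<Rightarrow> real) \<Rightarrow> (nat \<Rightarrow> real) \<Rightarrow> (nat \<Rightarrow> real) \<Rightarrow> real" where
  "LGRW N \<beta> L1 L2 =
     (\<Prod>j\<in>{1..N}. fLG (\<beta> j) (path0 L1 j - path0 L1 (j - 1)) / Gamma (\<beta> j)
                   * (fLG (\<beta> j) (path0 L2 j - path0 L2 (j - 1)) / Gamma (\<beta> j)))"

definition Vfun :: "nat \<Rightarrow> real \<Rightarrow> real \<Rightarrow> (nat \<Rightarrow> real) \<Rightarrow> (nat \<Rightarrow> real) \<Rightarrow> real" where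
  "Vfun N u v L1 L2 =
     (\<Sum>j\<in>{1..N}. exp (path0 L2 j - path0 L1 (j - 1))) powr (- (u + v))
     * exp (- v * (path0 L1 N - path0 L2 N))"

definition EV :: "nat \<Rightarrow> (nat \<Rightarrow> real) \<Rightarrow> real \<Rightarrow> real \<Rightarrow> ennreal" where
  "EV N \<beta> u v =
     (\<integral>\<^sup>+ L1. \<integral>\<^sup>+ L2. ennreal (Vfun N u v L1 L2 * LGRW N \<beta> L1 L2)
        \<partial>(PiM {1..N} (\<lambda>_. lborel)) \<partial>(PiM {1..N} (\<lambda>_. lborel)))"

text \<open>Marginal density of L_1 under the stationary log-gamma measure.\<close>
definition PstatLG :: "nat \<Rightarrow> (nat \<Rightarrow> real) \<Rightarrow> real \<Rightarrow> real \<Rightarrow> (nat \<Rightarrow> real) \<Rightarrow> ennreal" where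
  "PstatLG N \<beta> u v L1 =
     (\<integral>\<^sup>+ L2. ennreal (Vfun N u v L1 L2 * LGRW N \<beta> L1 L2) \<partial>(PiM {1..N} (\<lambda>_. lborel)))
     / EV N \<beta> u v"

end

theory Submission
  imports Defs
begin

lemma fLG_integral:
  fixes \<theta> :: real
  assumes th: "\<theta> > 0"
  shows "(\<integral>\<^sup>+x. ennreal (fLG \<theta> x) \<partial>lborel) = ennreal (Gamma \<theta>)"
proof -
  define h where "h x = exp (\<theta> * x - exp x)" for x :: real
  have 1: "(\<integral>\<^sup>+x. ennreal (fLG \<theta> x) \<partial>lborel) = (\<integral>\<^sup>+x. ennreal (h x) \<partial>lborel)"
    by (subst nn_integral_real_affine[of _ "-1" 0]) (auto simp: fLG_def h_def)
  define F where "F t = (if t > 0 then t powr (\<theta> - 1) / exp t else 0)" for t :: real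
  have 2: "ennreal (Gamma \<theta>) = (\<integral>\<^sup>+t. ennreal (F t) \<partial>lborel)"
    unfolding Gamma_conv_nn_integral_real[OF th]
    by (intro nn_integral_cong) (auto simp: F_def indicator_def)
  have Fm[measurable]: "F \<in> borel_measurable borel" unfolding F_def by measurable
  have hm[measurable]: "h \<in> borel_measurable borel" unfolding h_def by measurable
  have eq: "(\<integral>\<^sup>+t. ennreal (F t * indicator {exp (- real n)..exp (real n)} t) \<partial>lborel)
     = (\<integral>\<^sup>+x. ennreal (h x * indicator {- real n..real n} x) \<partial>lborel)" for n :: nat
  proof -
    have "(\<integral>\<^sup>+t. ennreal (F t * indicator {exp (- real n)..exp (real n)} t) \<partial>lborel)
      = (\<integral>\<^sup>+x. ennreal (F (exp x) * exp x * indicator {- real n..real n} x) \<partial>lborel)"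
      by (rule nn_integral_substitution[where g = exp and g' = exp])
         (auto intro!: derivative_eq_intros continuous_intros simp: set_borel_measurable_def)
    also have "\<dots> = (\<integral>\<^sup>+x. ennreal (h x * indicator {- real n..real n} x) \<partial>lborel)"
    proof (intro nn_integral_cong)
      fix x :: real
      have "F (exp x) * exp x = h x"
        by (simp add: F_def h_def powr_def exp_diff exp_add[symmetric] algebra_simps) (simp add: exp_add)
      then show "ennreal (F (exp x) * exp x * indicator {- real n..real n} x) = ennreal (h x * indicator {- real n..real n} x)"
        by simp
    qed
    finally show ?thesis .
  qed
  have L1: "(\<lambda>n. \<integral>\<^sup>+t. ennreal (F t * indicator {exp (- real n)..exp (real n)} t) \<partial>lborel)
     \<longlonglongrightarrow> (\<integral>\<^sup>+t. ennreal (F t) \<partial>lborel)"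
  proof (rule nn_integral_LIMSEQ)
    show "incseq (\<lambda>n t. ennreal (F t * indicator {exp (- real n)..exp (real n)} t))"
      unfolding incseq_def le_fun_def
    proof (intro allI impI)
      fix m n :: nat and t :: real assume "m \<le> n"
      then have e: "exp (- real n) \<le> exp (- real m)" "exp (real m) \<le> exp (real n)" by simp_all
      have "F t \<ge> 0" by (simp add: F_def)
      then show "ennreal (F t * indicator {exp (- real m)..exp (real m)} t) \<le> ennreal (F t * indicator {exp (- real n)..exp (real n)} t)"
        by (intro ennreal_leI mult_left_mono) (auto simp: indicator_def intro: order_trans[OF e(1)] order_trans[OF _ e(2)])
    qed
    fix t :: real
    show "(\<lambda>n. ennreal (F t * indicator {exp (- real n)..exp (real n)} t)) \<longlonglongrightarrow> ennreal (F t)"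
    proof (cases "t > 0")
      case True
      have "eventually (\<lambda>n. ennreal (F t * indicator {exp (- real n)..exp (real n)} t) = ennreal (F t)) sequentially"
      proof (rule eventually_sequentiallyI[of "nat \<lceil>\<bar>ln t\<bar>\<rceil>"])
        fix n assume n: "nat \<lceil>\<bar>ln t\<bar>\<rceil> \<le> n"
        then have "\<bar>ln t\<bar> \<le> real n" by linarith
        then have "- real n \<le> ln t" "ln t \<le> real n" by auto
        then have "exp (- real n) \<le> t" "t \<le> exp (real n)" using True
          by (metis exp_le_cancel_iff exp_ln)+
        then show "ennreal (F t * indicator {exp (- real n)..exp (real n)} t) = ennreal (F t)" by simp
      qed
      then show ?thesis by (rule tendsto_eventually)
    next
      case False then show ?thesis by (simp add: F_def)
    qed
  qed measurable
  have L2: "(\<lambda>n. \<integral>\<^sup>+x. ennreal (h x * indicator {- real n..real n} x) \<partial>lborel)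
     \<longlonglongrightarrow> (\<integral>\<^sup>+x. ennreal (h x) \<partial>lborel)"
  proof (rule nn_integral_LIMSEQ)
    show "incseq (\<lambda>n x. ennreal (h x * indicator {- real n..real n} x))"
      by (auto simp: incseq_def le_fun_def indicator_def h_def intro!: ennreal_leI)
    fix x :: real
    have "eventually (\<lambda>n. ennreal (h x * indicator {- real n..real n} x) = ennreal (h x)) sequentially"
    proof (rule eventually_sequentiallyI[of "nat \<lceil>\<bar>x\<bar>\<rceil>"])
      fix n assume n: "nat \<lceil>\<bar>x\<bar>\<rceil> \<le> n"
      then have "\<bar>x\<bar> \<le> real n" by linarith
      then have "x \<in> {- real n..real n}" by auto
      then show "ennreal (h x * indicator {- real n..real n} x) = ennreal (h x)" by simp
    qed
    then show "(\<lambda>n. ennreal (h x * indicator {- real n..real n} x)) \<longlonglongrightarrow> ennreal (h x)"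
      by (rule tendsto_eventually)
  qed measurable
  from L1 L2 eq have "(\<integral>\<^sup>+t. ennreal (F t) \<partial>lborel) = (\<integral>\<^sup>+x. ennreal (h x) \<partial>lborel)"
    using LIMSEQ_unique by auto
  then show ?thesis using 1 2 by simp
qed


lemma fLG_borel: "fLG t \<in> borel_measurable borel"
  unfolding fLG_def by measurable

lemma fLG_measurable[measurable (raw)]:
  "f \<in> borel_measurable M \<Longrightarrow> (\<lambda>x. fLG t (f x)) \<in> borel_measurable M"
  using measurable_compose[OF _ fLG_borel] by blast

lemma fLG_shift_integral:
  fixes \<beta> w z :: real
  assumes "\<beta> + w > 0"
  shows "(\<integral>\<^sup>+y. ennreal (exp (w * y) * fLG \<beta> (z - y)) \<partial>lborel) = ennreal (exp (w * z) * Gamma (\<beta> + w))"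
proof -
  have "(\<integral>\<^sup>+y. ennreal (exp (w * y) * fLG \<beta> (z - y)) \<partial>lborel)
      = (\<integral>\<^sup>+x. ennreal (exp (w * (z + (-1) * x)) * fLG \<beta> (z - (z + (-1) * x))) \<partial>lborel)"
    by (subst nn_integral_real_affine[of _ "-1" z]) (auto simp: fLG_def)
  also have "\<dots> = (\<integral>\<^sup>+x. ennreal (exp (w * z)) * ennreal (fLG (\<beta> + w) x) \<partial>lborel)"
    by (intro nn_integral_cong) (simp add: fLG_def ennreal_mult'[symmetric] exp_add[symmetric] algebra_simps)
  also have "\<dots> = ennreal (exp (w * z)) * ennreal (Gamma (\<beta> + w))"
    by (subst nn_integral_cmult) (auto simp: fLG_integral[OF assms])
  finally show ?thesis by (simp add: ennreal_mult')
qed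

lemma gamma_trick:
  fixes s S :: real
  assumes s: "s > 0" and S: "S > 0"
  shows "(\<integral>\<^sup>+t. ennreal (exp (s * t) * exp (- (exp t * S))) \<partial>lborel) = ennreal (Gamma s * S powr (- s))"
proof -
  have "(\<integral>\<^sup>+t. ennreal (exp (s * t) * exp (- (exp t * S))) \<partial>lborel)
      = (\<integral>\<^sup>+x. ennreal (exp (s * (- ln S + (-1) * x)) * exp (- (exp (- ln S + (-1) * x) * S))) \<partial>lborel)"
    by (subst nn_integral_real_affine[of _ "-1" "- ln S"]) auto
  also have "\<dots> = (\<integral>\<^sup>+x. ennreal (S powr (- s)) * ennreal (fLG s x) \<partial>lborel)"
  proof (intro nn_integral_cong)
    fix x :: real
    have "exp (- ln S + (-1) * x) = exp (- ln S) * exp (-x)" by (simp add: exp_add[symmetric])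
    also have "exp (- ln S) = 1 / S" using S by (simp add: exp_minus inverse_eq_divide)
    finally have "exp (- ln S + (-1) * x) * S = exp (- x)"
      using S by simp
    then have e1: "exp (- (exp (- ln S + (-1) * x) * S)) = exp (- exp (- x))" by simp
    have e2: "exp (s * (- ln S + (-1) * x)) = S powr (- s) * exp (- s * x)"
      using S by (simp add: powr_def exp_add[symmetric] algebra_simps)
    have e3: "fLG s x = exp (- s * x) * exp (- exp (- x))"
      unfolding fLG_def by (simp add: exp_add[symmetric])
    have "ennreal (exp (s * (- ln S + (-1) * x)) * exp (- (exp (- ln S + (-1) * x) * S)))
       = ennreal (S powr (- s) * (exp (- s * x) * exp (- exp (- x))))"
      by (simp only: e1 e2 mult.assoc)
    also have "\<dots> = ennreal (S powr (- s)) * ennreal (fLG s x)"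
      by (simp add: e3 ennreal_mult')
    finally show "ennreal (exp (s * (- ln S + (-1) * x)) * exp (- (exp (- ln S + (-1) * x) * S))) =
         ennreal (S powr (- s)) * ennreal (fLG s x)" .
  qed
  also have "\<dots> = ennreal (S powr (- s)) * ennreal (Gamma s)"
    by (subst nn_integral_cmult) (auto simp: fLG_integral[OF s])
  finally show ?thesis using Gamma_real_pos[OF s] by (simp add: ennreal_mult mult.commute)
qed

lemma PiM_lborel_component_any[measurable]:
  "(\<lambda>x. x i) \<in> borel_measurable (PiM I (\<lambda>_. lborel :: real measure))"
proof (cases "i \<in> I")
  case True then show ?thesis by measurable
next
  case False
  have "(\<lambda>x. undefined :: real) \<in> borel_measurable (PiM I (\<lambda>_. lborel :: real measure))" by simp
  then show ?thesis
    by (rule measurable_cong[THEN iffD1, rotated]) (use False in \<open>auto simp: space_PiM PiE_def extensional_def\<close>)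
qed

lemma PiM_lborel_shift_distr:
  fixes c :: "'i \<Rightarrow> real"
  assumes I: "finite I"
  shows "distr (PiM I (\<lambda>_. lborel)) (PiM I (\<lambda>_. lborel)) (\<lambda>x. \<lambda>i\<in>I. x i + c i) = PiM I (\<lambda>_. lborel)"
proof -
  interpret product_sigma_finite "\<lambda>_. lborel :: real measure" by standard
  have meas: "(\<lambda>x. \<lambda>i\<in>I. x i + c i) \<in> PiM I (\<lambda>_. lborel) \<rightarrow>\<^sub>M PiM I (\<lambda>_. lborel)"
    by measurable
  show ?thesis
  proof (rule PiM_eqI[OF I])
    show "sets (distr (PiM I (\<lambda>_. lborel)) (PiM I (\<lambda>_. lborel)) (\<lambda>x. \<lambda>i\<in>I. x i + c i)) = sets (PiM I (\<lambda>_. lborel))"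
      by simp
    fix A assume A: "\<And>i. i \<in> I \<Longrightarrow> A i \<in> sets (lborel :: real measure)"
    have pre: "(\<lambda>x. c i + x) -` A i \<in> sets borel" if "i \<in> I" for i
    proof -
      have m: "((+) (c i) :: real \<Rightarrow> real) \<in> borel_measurable borel" by simp
      show ?thesis
        by (rule measurable_sets_borel[OF m]) (use A that in simp)
    qed
    have "emeasure (distr (PiM I (\<lambda>_. lborel)) (PiM I (\<lambda>_. lborel)) (\<lambda>x. \<lambda>i\<in>I. x i + c i)) (Pi\<^sub>E I A)
       = emeasure (PiM I (\<lambda>_. lborel)) ((\<lambda>x. \<lambda>i\<in>I. x i + c i) -` Pi\<^sub>E I A \<inter> space (PiM I (\<lambda>_. lborel)))"
      using A I by (intro emeasure_distr meas sets_PiM_I_finite) auto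
    also have "(\<lambda>x. \<lambda>i\<in>I. x i + c i) -` Pi\<^sub>E I A \<inter> space (PiM I (\<lambda>_. lborel)) = Pi\<^sub>E I (\<lambda>i. (\<lambda>x. c i + x) -` A i)"
      by (auto simp: space_PiM PiE_def Pi_def extensional_def add.commute)
    also have "emeasure (PiM I (\<lambda>_. lborel)) (Pi\<^sub>E I (\<lambda>i. (\<lambda>x. c i + x) -` A i)) = (\<Prod>i\<in>I. emeasure lborel ((\<lambda>x. c i + x) -` A i))"
      using pre by (intro emeasure_PiM I) auto
    also have "\<dots> = (\<Prod>i\<in>I. emeasure lborel (A i))"
    proof (intro prod.cong refl)
      fix i assume "i \<in> I"
      have "emeasure lborel (A i) = emeasure (distr lborel borel ((+) (c i))) (A i)"
        by (simp add: lborel_distr_plus)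
      also have "\<dots> = emeasure lborel ((+) (c i) -` A i \<inter> space lborel)"
        using A \<open>i \<in> I\<close> by (intro emeasure_distr) auto
      finally show "emeasure lborel ((\<lambda>x. c i + x) -` A i) = emeasure lborel (A i)" by simp
    qed
    finally show "emeasure (distr (PiM I (\<lambda>_. lborel)) (PiM I (\<lambda>_. lborel)) (\<lambda>x. \<lambda>i\<in>I. x i + c i)) (Pi\<^sub>E I A) = (\<Prod>i\<in>I. emeasure lborel (A i))" .
  qed
qed

lemma PiM_lborel_shift:
  fixes c :: "'i \<Rightarrow> real"
  assumes I: "finite I" and f[measurable]: "f \<in> borel_measurable (PiM I (\<lambda>_. lborel))"
  shows "(\<integral>\<^sup>+x. f (\<lambda>i\<in>I. x i + c i) \<partial>PiM I (\<lambda>_. lborel)) = (\<integral>\<^sup>+x. f x \<partial>PiM I (\<lambda>_. lborel))"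
proof -
  have "(\<integral>\<^sup>+x. f x \<partial>PiM I (\<lambda>_. lborel)) = (\<integral>\<^sup>+x. f x \<partial>distr (PiM I (\<lambda>_. lborel)) (PiM I (\<lambda>_. lborel)) (\<lambda>x. \<lambda>i\<in>I. x i + c i))"
    by (simp add: PiM_lborel_shift_distr[OF I])
  also have "\<dots> = (\<integral>\<^sup>+x. f (\<lambda>i\<in>I. x i + c i) \<partial>PiM I (\<lambda>_. lborel))"
    by (rule nn_integral_distr) measurable
  finally show ?thesis ..
qed


definition Qc :: "nat \<Rightarrow> (nat \<Rightarrow> real) \<Rightarrow> (nat \<Rightarrow> real) \<Rightarrow> real" where
  "Qc N \<beta> m = (\<Prod>j\<in>{2..N}. fLG (\<beta> j) (m j - m (j - 1)))"
definition Ec :: "nat \<Rightarrow> (nat \<Rightarrow> real) \<Rightarrow> (nat \<Rightarrow> real) \<Rightarrow> real" where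
  "Ec N L m = (\<Prod>j\<in>{1..N}. exp (- exp (m j - path0 L (j - 1))))"
definition F1 :: "nat \<Rightarrow> (nat \<Rightarrow> real) \<Rightarrow> (nat \<Rightarrow> real) \<Rightarrow> real" where
  "F1 N \<beta> L = (\<Prod>j\<in>{1..N}. fLG (\<beta> j) (path0 L j - path0 L (j - 1)))"
definition Hc :: "nat \<Rightarrow> (nat \<Rightarrow> real) \<Rightarrow> real \<Rightarrow> real \<Rightarrow> (nat \<Rightarrow> real) \<Rightarrow> (nat \<Rightarrow> real) \<Rightarrow> real" where
  "Hc N \<beta> u v L m = exp (u * m 1) * exp (- v * (L N - m N)) * Qc N \<beta> m * Ec N L m"
definition GG :: "nat \<Rightarrow> (nat \<Rightarrow> real) \<Rightarrow> real" where
  "GG N \<beta> = (\<Prod>j\<in>{1..N}. Gamma (\<beta> j))"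
definition Sfun :: "nat \<Rightarrow> (nat \<Rightarrow> real) \<Rightarrow> (nat \<Rightarrow> real) \<Rightarrow> real" where
  "Sfun N L L2 = (\<Sum>j\<in>{1..N}. exp (path0 L2 j - path0 L (j - 1)))"

lemma prod_split_first:
  assumes "N \<ge> (1::nat)"
  shows "(\<Prod>j\<in>{1..N}. f j) = f 1 * (\<Prod>j\<in>{2..N}. f j)"
proof -
  have "{1..N} = insert 1 {2..N}" using assms by auto
  then show ?thesis by simp
qed

lemma wtGP_split:
  assumes N: "N \<ge> 1"
  shows "wtGP N \<beta> u v (\<lambda>j. if j = 0 then a else a + L j) (m(0 := y)) =
    exp (u * y) * fLG (\<beta> 1) (m 1 - y) *
    (exp (- u * a) * F1 N \<beta> L * exp (- v * (a + L N - m N)) * Qc N \<beta> m * Ec N L (\<lambda>j. m j - a))"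
proof -
  define l1 where "l1 = (\<lambda>j. if j = 0 then a else a + L j)"
  define l2 where "l2 = m(0 := y)"
  have A: "(\<Prod>j\<in>{1..N}. fLG (\<beta> j) (l1 j - l1 (j - 1))) = F1 N \<beta> L"
    unfolding F1_def by (intro prod.cong refl) (auto simp: l1_def path0_def)
  have B: "(\<Prod>j\<in>{1..N}. fLG (\<beta> j) (l2 j - l2 (j - 1))) = fLG (\<beta> 1) (m 1 - y) * Qc N \<beta> m"
    unfolding prod_split_first[OF N] Qc_def
    by (auto simp: l2_def intro!: prod.cong)
  have C: "(\<Prod>j\<in>{1..N}. exp (- exp (- (l1 (j - 1) - l2 j)))) = Ec N L (\<lambda>j. m j - a)"
    unfolding Ec_def by (intro prod.cong refl) (auto simp: l1_def l2_def path0_def)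
  have D: "exp (- u * (l1 0 - l2 0) - v * (l1 N - l2 N)) = exp (- u * a) * exp (u * y) * exp (- v * (a + L N - m N))"
    using N by (simp add: l1_def l2_def exp_add[symmetric] exp_diff[symmetric] algebra_simps)
  have "wtGP N \<beta> u v l1 l2 = exp (- u * (l1 0 - l2 0) - v * (l1 N - l2 N)) *
     ((\<Prod>j\<in>{1..N}. fLG (\<beta> j) (l1 j - l1 (j - 1))) * (\<Prod>j\<in>{1..N}. fLG (\<beta> j) (l2 j - l2 (j - 1)))
      * (\<Prod>j\<in>{1..N}. exp (- exp (- (l1 (j - 1) - l2 j)))))"
    unfolding wtGP_def by (simp add: prod.distrib)
  also have "\<dots> = exp (u * y) * fLG (\<beta> 1) (m 1 - y) *
    (exp (- u * a) * F1 N \<beta> L * exp (- v * (a + L N - m N)) * Qc N \<beta> m * Ec N L (\<lambda>j. m j - a))"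
    unfolding A B C D by (simp add: algebra_simps)
  finally show ?thesis unfolding l1_def l2_def .
qed


lemma fLG_nonneg[simp]: "fLG t x \<ge> 0" by (simp add: fLG_def)
lemma F1_nonneg[simp]: "F1 N \<beta> L \<ge> 0" by (simp add: F1_def prod_nonneg)
lemma Qc_nonneg[simp]: "Qc N \<beta> L \<ge> 0" by (simp add: Qc_def prod_nonneg)
lemma Ec_nonneg[simp]: "Ec N L m \<ge> 0" by (simp add: Ec_def prod_nonneg)
lemma Hc_nonneg[simp]: "Hc N \<beta> u v L m \<ge> 0" by (simp add: Hc_def)

lemma path0_measurable[measurable]:
  "(\<lambda>x. path0 x j) \<in> borel_measurable (PiM I (\<lambda>_. lborel :: real measure))"
  unfolding path0_def by (cases "j = 0") simp_all

lemma Qc_measurable[measurable]: "Qc N \<beta> \<in> borel_measurable (PiM I (\<lambda>_. lborel))"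
  unfolding Qc_def by measurable
lemma Ec_measurable[measurable]: "Ec N L \<in> borel_measurable (PiM I (\<lambda>_. lborel))"
  unfolding Ec_def by measurable
lemma Hc_measurable[measurable]: "Hc N \<beta> u v L \<in> borel_measurable (PiM I (\<lambda>_. lborel))"
  unfolding Hc_def by measurable

lemma wtP_reduce:
  assumes N: "N \<ge> 1" and b: "\<beta> 1 + u > 0"
  shows "wtP N \<beta> u v (\<lambda>j. if j = 0 then a else a + L j) =
    (\<integral>\<^sup>+M. ennreal (Gamma (\<beta> 1 + u) * F1 N \<beta> L * Hc N \<beta> u v L M) \<partial>PiM {1..N} (\<lambda>_. lborel))"
proof -
  interpret product_sigma_finite "\<lambda>_. lborel :: real measure" by standard
  define l1 where "l1 = (\<lambda>j. if j = 0 then a else a + L j)"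
  define R where "R m = exp (- u * a) * F1 N \<beta> L * exp (- v * (a + L N - m N)) * Qc N \<beta> m * Ec N L (\<lambda>j. m j - a)" for m
  define G0 where "G0 m = exp (u * m 1) * Gamma (\<beta> 1 + u) * R m" for m
  have Rnn: "R m \<ge> 0" for m by (simp add: R_def)
  have Ecm: "(\<lambda>m. Ec N L (\<lambda>j. m j - a)) \<in> borel_measurable (PiM {1..N} (\<lambda>_. lborel))"
    unfolding Ec_def by measurable
  have Rm[measurable]: "R \<in> borel_measurable (PiM {1..N} (\<lambda>_. lborel))"
    unfolding R_def using Ecm by measurable
  have G0m[measurable]: "G0 \<in> borel_measurable (PiM {1..N} (\<lambda>_. lborel))"
    unfolding G0_def by measurable
  have ins: "{..N} = insert 0 {1..N}" by auto
  have wm: "(\<lambda>l2. ennreal (wtGP N \<beta> u v l1 l2)) \<in> borel_measurable (PiM (insert 0 {1..N}) (\<lambda>_. lborel))"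
    unfolding wtGP_def by measurable
  have "wtP N \<beta> u v l1 = (\<integral>\<^sup>+l2. ennreal (wtGP N \<beta> u v l1 l2) \<partial>PiM (insert 0 {1..N}) (\<lambda>_. lborel))"
    unfolding wtP_def ins ..
  also have "\<dots> = (\<integral>\<^sup>+m. (\<integral>\<^sup>+y. ennreal (wtGP N \<beta> u v l1 (m(0 := y))) \<partial>lborel) \<partial>PiM {1..N} (\<lambda>_. lborel))"
    by (rule product_nn_integral_insert) (use wm in auto)
  also have "\<dots> = (\<integral>\<^sup>+m. ennreal (G0 m) \<partial>PiM {1..N} (\<lambda>_. lborel))"
  proof (intro nn_integral_cong)
    fix m :: "nat \<Rightarrow> real"
    have "(\<integral>\<^sup>+y. ennreal (wtGP N \<beta> u v l1 (m(0 := y))) \<partial>lborel)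
        = (\<integral>\<^sup>+y. ennreal (exp (u * y) * fLG (\<beta> 1) (m 1 - y)) * ennreal (R m) \<partial>lborel)"
      unfolding l1_def wtGP_split[OF N] R_def[symmetric] using Rnn by (simp add: ennreal_mult'')
    also have "\<dots> = (\<integral>\<^sup>+y. ennreal (exp (u * y) * fLG (\<beta> 1) (m 1 - y)) \<partial>lborel) * ennreal (R m)"
    proof (rule nn_integral_multc)
      have "(\<lambda>y. exp (u * y) * fLG (\<beta> 1) (m 1 - y)) \<in> borel_measurable borel"
        unfolding fLG_def by (intro borel_measurable_continuous_onI continuous_intros)
      then show "(\<lambda>y. ennreal (exp (u * y) * fLG (\<beta> 1) (m 1 - y))) \<in> borel_measurable lborel"
        by simp
    qed
    also have "\<dots> = ennreal (G0 m)"
      unfolding fLG_shift_integral[OF b] G0_def using Rnn Gamma_real_pos[OF b]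
      by (simp add: ennreal_mult'' mult.commute)
    finally show "(\<integral>\<^sup>+y. ennreal (wtGP N \<beta> u v l1 (m(0 := y))) \<partial>lborel) = ennreal (G0 m)" .
  qed
  also have "\<dots> = (\<integral>\<^sup>+M. ennreal (G0 (\<lambda>i\<in>{1..N}. M i + a)) \<partial>PiM {1..N} (\<lambda>_. lborel))"
    by (rule PiM_lborel_shift[symmetric], simp, measurable)
  also have "\<dots> = (\<integral>\<^sup>+M. ennreal (Gamma (\<beta> 1 + u) * F1 N \<beta> L * Hc N \<beta> u v L M) \<partial>PiM {1..N} (\<lambda>_. lborel))"
  proof (intro nn_integral_cong)
    fix M :: "nat \<Rightarrow> real"
    define M' where "M' = (\<lambda>i\<in>{1..N}. M i + a)"
    have m1: "M' 1 = M 1 + a" and mN: "M' N = M N + a" using N by (auto simp: M'_def)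
    have q: "Qc N \<beta> M' = Qc N \<beta> M" unfolding Qc_def by (intro prod.cong refl) (auto simp: M'_def)
    have e: "Ec N L (\<lambda>j. M' j - a) = Ec N L M" unfolding Ec_def by (intro prod.cong refl) (auto simp: M'_def)
    have x: "exp (u * (M 1 + a)) * exp (- u * a) = exp (u * M 1)"
      by (simp add: exp_add[symmetric] algebra_simps)
    have "G0 M' = (exp (u * (M 1 + a)) * exp (- u * a)) * Gamma (\<beta> 1 + u) * F1 N \<beta> L * exp (- v * (L N - M N)) * Qc N \<beta> M * Ec N L M"
      unfolding G0_def R_def m1 mN q e by (simp add: algebra_simps)
    also have "\<dots> = Gamma (\<beta> 1 + u) * F1 N \<beta> L * Hc N \<beta> u v L M"
      unfolding x Hc_def by (simp add: algebra_simps)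
    finally show "ennreal (G0 M') = ennreal (Gamma (\<beta> 1 + u) * F1 N \<beta> L * Hc N \<beta> u v L M)" by simp
  qed
  finally show ?thesis unfolding l1_def .
qed


definition Jf :: "nat \<Rightarrow> (nat \<Rightarrow> real) \<Rightarrow> real \<Rightarrow> real \<Rightarrow> (nat \<Rightarrow> real) \<Rightarrow> real \<Rightarrow> (nat \<Rightarrow> real) \<Rightarrow> real" where
  "Jf N \<beta> u v L t M = exp (u * t) * fLG (\<beta> 1) (M 1 - t) * exp (- u * M 1) * F1 N \<beta> L * Hc N \<beta> u v L M"

lemma LGRW_eq:
  assumes N: "N \<ge> 1"
  shows "LGRW N \<beta> L L2 = F1 N \<beta> L * (fLG (\<beta> 1) (L2 1) * Qc N \<beta> L2) / (GG N \<beta> * GG N \<beta>)"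
proof -
  have "LGRW N \<beta> L L2 = (\<Prod>j\<in>{1..N}. (fLG (\<beta> j) (path0 L j - path0 L (j - 1)) * fLG (\<beta> j) (path0 L2 j - path0 L2 (j - 1))) / (Gamma (\<beta> j) * Gamma (\<beta> j)))"
    unfolding LGRW_def by (intro prod.cong refl) simp
  also have "\<dots> = (\<Prod>j\<in>{1..N}. fLG (\<beta> j) (path0 L j - path0 L (j - 1)) * fLG (\<beta> j) (path0 L2 j - path0 L2 (j - 1))) / (\<Prod>j\<in>{1..N}. Gamma (\<beta> j) * Gamma (\<beta> j))"
    by (rule prod_dividef)
  also have "(\<Prod>j\<in>{1..N}. fLG (\<beta> j) (path0 L j - path0 L (j - 1)) * fLG (\<beta> j) (path0 L2 j - path0 L2 (j - 1)))
      = F1 N \<beta> L * (\<Prod>j\<in>{1..N}. fLG (\<beta> j) (path0 L2 j - path0 L2 (j - 1)))"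
    unfolding F1_def by (rule prod.distrib)
  also have "(\<Prod>j\<in>{1..N}. fLG (\<beta> j) (path0 L2 j - path0 L2 (j - 1))) = fLG (\<beta> 1) (L2 1) * Qc N \<beta> L2"
    unfolding prod_split_first[OF N] Qc_def by (auto simp: path0_def intro!: prod.cong)
  also have "(\<Prod>j\<in>{1..N}. Gamma (\<beta> j) * Gamma (\<beta> j)) = GG N \<beta> * GG N \<beta>"
    unfolding GG_def by (rule prod.distrib)
  finally show ?thesis .
qed

lemma Sfun_pos:
  assumes N: "N \<ge> 1"
  shows "Sfun N L L2 > 0"
  unfolding Sfun_def using N by (intro sum_pos) auto

lemma Ec_shift:
  "Ec N L (\<lambda>i. L2 i + t) = exp (- (exp t * Sfun N L L2))"
proof -
  have "Ec N L (\<lambda>i. L2 i + t) = (\<Prod>j\<in>{1..N}. exp (- (exp t * exp (path0 L2 j - path0 L (j - 1)))))"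
    unfolding Ec_def by (intro prod.cong refl) (auto simp: path0_def exp_add[symmetric] algebra_simps)
  also have "\<dots> = exp (\<Sum>j\<in>{1..N}. - (exp t * exp (path0 L2 j - path0 L (j - 1))))"
    by (simp add: exp_sum)
  also have "\<dots> = exp (- (exp t * Sfun N L L2))"
    unfolding Sfun_def by (simp add: sum_distrib_left sum_negf)
  finally show ?thesis .
qed

lemma Qc_shift: "Qc N \<beta> (\<lambda>i. L2 i + t) = Qc N \<beta> L2"
  unfolding Qc_def by (intro prod.cong refl) simp

lemma V_pointwise:
  assumes N: "N \<ge> 1" and uv: "u + v > 0" and GGnz: "GG N \<beta> \<noteq> 0"
  shows "ennreal (Gamma (u + v) * (GG N \<beta> * GG N \<beta>) * (Vfun N u v L L2 * LGRW N \<beta> L L2)) =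
    (\<integral>\<^sup>+t. ennreal (Jf N \<beta> u v L t (\<lambda>i. L2 i + t)) \<partial>lborel)"
proof -
  define S where "S = Sfun N L L2"
  define W where "W = fLG (\<beta> 1) (L2 1) * Qc N \<beta> L2 * F1 N \<beta> L * exp (- v * (L N - L2 N))"
  have Spos: "S > 0" unfolding S_def by (rule Sfun_pos[OF N])
  have Wnn: "W \<ge> 0" unfolding W_def by simp
  have J: "Jf N \<beta> u v L t (\<lambda>i. L2 i + t) = exp ((u + v) * t) * exp (- (exp t * S)) * W" for t
  proof -
    have x: "exp (u * t) * exp (- u * (L2 1 + t)) * exp (u * (L2 1 + t)) * exp (- v * (L N - (L2 N + t)))
       = exp ((u + v) * t) * exp (- v * (L N - L2 N))"
      by (simp add: exp_add[symmetric] algebra_simps)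
    have "Jf N \<beta> u v L t (\<lambda>i. L2 i + t) = (exp (u * t) * exp (- u * (L2 1 + t)) * exp (u * (L2 1 + t)) * exp (- v * (L N - (L2 N + t))))
       * fLG (\<beta> 1) (L2 1) * F1 N \<beta> L * Qc N \<beta> L2 * exp (- (exp t * S))"
      unfolding Jf_def Hc_def Qc_shift Ec_shift S_def by (simp add: algebra_simps)
    also have "\<dots> = exp ((u + v) * t) * exp (- (exp t * S)) * W"
      unfolding x W_def by (simp add: algebra_simps)
    finally show ?thesis .
  qed
  have "(\<integral>\<^sup>+t. ennreal (Jf N \<beta> u v L t (\<lambda>i. L2 i + t)) \<partial>lborel)
      = (\<integral>\<^sup>+t. ennreal (exp ((u + v) * t) * exp (- (exp t * S))) * ennreal W \<partial>lborel)"
    unfolding J using Wnn by (simp add: ennreal_mult'')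
  also have "\<dots> = (\<integral>\<^sup>+t. ennreal (exp ((u + v) * t) * exp (- (exp t * S))) \<partial>lborel) * ennreal W"
  proof (rule nn_integral_multc)
    have "(\<lambda>t. exp ((u + v) * t) * exp (- (exp t * S))) \<in> borel_measurable borel"
      by (intro borel_measurable_continuous_onI continuous_intros)
    then show "(\<lambda>t. ennreal (exp ((u + v) * t) * exp (- (exp t * S)))) \<in> borel_measurable lborel"
      by simp
  qed
  also have "\<dots> = ennreal (Gamma (u + v) * S powr (- (u + v))) * ennreal W"
    by (simp add: gamma_trick[OF uv Spos])
  also have "\<dots> = ennreal (Gamma (u + v) * S powr (- (u + v)) * W)"
    using Wnn Gamma_real_pos[OF uv] by (simp add: ennreal_mult'')
  also have "Gamma (u + v) * S powr (- (u + v)) * W = Gamma (u + v) * (GG N \<beta> * GG N \<beta>) * (Vfun N u v L L2 * LGRW N \<beta> L L2)"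
    unfolding LGRW_eq[OF N] Vfun_def W_def S_def Sfun_def using N GGnz
    by (simp add: path0_def field_simps)
  finally show ?thesis ..
qed


definition Pnum :: "nat \<Rightarrow> (nat \<Rightarrow> real) \<Rightarrow> real \<Rightarrow> real \<Rightarrow> (nat \<Rightarrow> real) \<Rightarrow> ennreal" where
  "Pnum N \<beta> u v L = (\<integral>\<^sup>+ L2. ennreal (Vfun N u v L L2 * LGRW N \<beta> L L2) \<partial>(PiM {1..N} (\<lambda>_. lborel)))"

lemma Jf_meas1: "(\<lambda>p. ennreal (Jf N \<beta> u v L (fst p) (snd p))) \<in> borel_measurable (lborel \<Otimes>\<^sub>M PiM I (\<lambda>_. lborel))"
  unfolding Jf_def Hc_def Qc_def Ec_def F1_def by measurable

lemma Jf_meas2: "(\<lambda>p. ennreal (Jf N \<beta> u v L (fst p) (\<lambda>i. snd p i + fst p))) \<in> borel_measurable (lborel \<Otimes>\<^sub>M PiM I (\<lambda>_. lborel))"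
  unfolding Jf_def Hc_def Qc_def Ec_def F1_def by measurable

lemma VL_meas: "(\<lambda>L2. ennreal (Vfun N u v L L2 * LGRW N \<beta> L L2)) \<in> borel_measurable (PiM I (\<lambda>_. lborel))"
  unfolding Vfun_def LGRW_def by measurable


lemma Jf_restrict:
  assumes N: "N \<ge> 1"
  shows "Jf N \<beta> u v L t (\<lambda>i\<in>{1..N}. g i) = Jf N \<beta> u v L t g"
proof -
  have q: "Qc N \<beta> (\<lambda>i\<in>{1..N}. g i) = Qc N \<beta> g" unfolding Qc_def by (intro prod.cong refl) auto
  have e: "Ec N L (\<lambda>i\<in>{1..N}. g i) = Ec N L g" unfolding Ec_def by (intro prod.cong refl) auto
  show ?thesis using N unfolding Jf_def Hc_def q e by simp
qed

lemma main_identity: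
  assumes N: "N \<ge> 1" and b: "\<beta> 1 + u > 0" and uv: "u + v > 0" and GGnz: "GG N \<beta> \<noteq> 0"
  shows "wtP N \<beta> u v (\<lambda>j. if j = 0 then a else a + L j) = ennreal (Gamma (u + v) * (GG N \<beta> * GG N \<beta>)) * Pnum N \<beta> u v L"
proof -
  let ?P = "PiM {1..N} (\<lambda>_. lborel :: real measure)"
  interpret P: product_sigma_finite "\<lambda>_. lborel :: real measure" by standard
  interpret Pf: finite_product_sigma_finite "\<lambda>_. lborel :: real measure" "{1..N}" by standard simp
  interpret pair_sigma_finite lborel ?P by standard
  have "wtP N \<beta> u v (\<lambda>j. if j = 0 then a else a + L j) =
    (\<integral>\<^sup>+M. ennreal (Gamma (\<beta> 1 + u) * F1 N \<beta> L * Hc N \<beta> u v L M) \<partial>?P)"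
    by (rule wtP_reduce[where \<beta>=\<beta> and u=u, OF N b])
  also have "\<dots> = (\<integral>\<^sup>+M. (\<integral>\<^sup>+t. ennreal (Jf N \<beta> u v L t M) \<partial>lborel) \<partial>?P)"
  proof (intro nn_integral_cong)
    fix M :: "nat \<Rightarrow> real"
    define R where "R = exp (- u * M 1) * F1 N \<beta> L * Hc N \<beta> u v L M"
    have Rnn: "R \<ge> 0" by (simp add: R_def)
    have "(\<integral>\<^sup>+t. ennreal (Jf N \<beta> u v L t M) \<partial>lborel) = (\<integral>\<^sup>+t. ennreal (exp (u * t) * fLG (\<beta> 1) (M 1 - t)) * ennreal R \<partial>lborel)"
      unfolding Jf_def R_def using Rnn[unfolded R_def] by (simp add: ennreal_mult'' mult.assoc)
    also have "\<dots> = (\<integral>\<^sup>+t. ennreal (exp (u * t) * fLG (\<beta> 1) (M 1 - t)) \<partial>lborel) * ennreal R"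
    proof (rule nn_integral_multc)
      have "(\<lambda>y. exp (u * y) * fLG (\<beta> 1) (M 1 - y)) \<in> borel_measurable borel"
        unfolding fLG_def by (intro borel_measurable_continuous_onI continuous_intros)
      then show "(\<lambda>y. ennreal (exp (u * y) * fLG (\<beta> 1) (M 1 - y))) \<in> borel_measurable lborel"
        by simp
    qed
    also have "\<dots> = ennreal (exp (u * M 1) * Gamma (\<beta> 1 + u) * R)"
      unfolding fLG_shift_integral[OF b] using Rnn Gamma_real_pos[OF b] by (simp add: ennreal_mult'')
    also have "exp (u * M 1) * Gamma (\<beta> 1 + u) * R = Gamma (\<beta> 1 + u) * F1 N \<beta> L * Hc N \<beta> u v L M"
      unfolding R_def by (simp add: exp_add[symmetric] algebra_simps)
    finally show "ennreal (Gamma (\<beta> 1 + u) * F1 N \<beta> L * Hc N \<beta> u v L M) = (\<integral>\<^sup>+t. ennreal (Jf N \<beta> u v L t M) \<partial>lborel)" ..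
  qed
  also have "\<dots> = (\<integral>\<^sup>+t. (\<integral>\<^sup>+M. ennreal (Jf N \<beta> u v L t M) \<partial>?P) \<partial>lborel)"
    using Fubini[OF Jf_meas1[of N \<beta> u v L "{1..N}"]] by simp
  also have "\<dots> = (\<integral>\<^sup>+t. (\<integral>\<^sup>+L2. ennreal (Jf N \<beta> u v L t (\<lambda>i. L2 i + t)) \<partial>?P) \<partial>lborel)"
  proof (rule nn_integral_cong)
    fix t :: real
    have m: "(\<lambda>M. ennreal (Jf N \<beta> u v L t M)) \<in> borel_measurable ?P"
      using measurable_Pair2[OF Jf_meas1[of N \<beta> u v L "{1..N}"], of t] by simp
    have "(\<integral>\<^sup>+M. ennreal (Jf N \<beta> u v L t M) \<partial>?P) = (\<integral>\<^sup>+L2. ennreal (Jf N \<beta> u v L t (\<lambda>i\<in>{1..N}. L2 i + t)) \<partial>?P)"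
      by (rule PiM_lborel_shift[symmetric, OF _ m]) simp
    also have "\<dots> = (\<integral>\<^sup>+L2. ennreal (Jf N \<beta> u v L t (\<lambda>i. L2 i + t)) \<partial>?P)"
      using Jf_restrict[OF N] by simp
    finally have "(\<integral>\<^sup>+M. ennreal (Jf N \<beta> u v L t M) \<partial>?P) = (\<integral>\<^sup>+L2. ennreal (Jf N \<beta> u v L t (\<lambda>i. L2 i + t)) \<partial>?P)" .
    then show "(\<integral>\<^sup>+M. ennreal (Jf N \<beta> u v L t M) \<partial>?P) = (\<integral>\<^sup>+L2. ennreal (Jf N \<beta> u v L t (\<lambda>i. L2 i + t)) \<partial>?P)" .
  qed
  also have "\<dots> = (\<integral>\<^sup>+L2. (\<integral>\<^sup>+t. ennreal (Jf N \<beta> u v L t (\<lambda>i. L2 i + t)) \<partial>lborel) \<partial>?P)"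
    using Fubini[OF Jf_meas2[of N \<beta> u v L "{1..N}"]] by simp
  also have "\<dots> = (\<integral>\<^sup>+L2. ennreal (Gamma (u + v) * (GG N \<beta> * GG N \<beta>)) * ennreal (Vfun N u v L L2 * LGRW N \<beta> L L2) \<partial>?P)"
  proof (intro nn_integral_cong)
    fix L2 :: "nat \<Rightarrow> real"
    have "Gamma (u + v) * (GG N \<beta> * GG N \<beta>) \<ge> 0" using Gamma_real_pos[OF uv] by simp
    then show "(\<integral>\<^sup>+t. ennreal (Jf N \<beta> u v L t (\<lambda>i. L2 i + t)) \<partial>lborel) =
      ennreal (Gamma (u + v) * (GG N \<beta> * GG N \<beta>)) * ennreal (Vfun N u v L L2 * LGRW N \<beta> L L2)"
      using V_pointwise[OF N uv GGnz, of L L2] by (simp only: ennreal_mult'[symmetric])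
  qed
  also have "\<dots> = ennreal (Gamma (u + v) * (GG N \<beta> * GG N \<beta>)) * Pnum N \<beta> u v L"
    unfolding Pnum_def by (rule nn_integral_cmult) (rule VL_meas)
  finally show ?thesis .
qed


lemma Pnum_cong:
  assumes N: "N \<ge> 1" and eq: "\<And>j. j \<in> {1..N} \<Longrightarrow> L' j = L j"
  shows "Pnum N \<beta> u v L' = Pnum N \<beta> u v L"
proof -
  have p: "path0 L' j = path0 L j" if "j \<le> N" for j
    using eq that by (cases "j = 0") (auto simp: path0_def)
  have "Vfun N u v L' L2 * LGRW N \<beta> L' L2 = Vfun N u v L L2 * LGRW N \<beta> L L2" for L2
  proof -
    have s: "(\<Sum>j\<in>{1..N}. exp (path0 L2 j - path0 L' (j - 1))) = (\<Sum>j\<in>{1..N}. exp (path0 L2 j - path0 L (j - 1)))"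
      by (intro sum.cong refl) (auto simp: p)
    have "Vfun N u v L' L2 = Vfun N u v L L2"
      unfolding Vfun_def s using p by simp
    moreover have "LGRW N \<beta> L' L2 = LGRW N \<beta> L L2"
      unfolding LGRW_def by (intro prod.cong refl) (auto simp: p)
    ultimately show ?thesis by simp
  qed
  then show ?thesis unfolding Pnum_def by simp
qed

lemma Pnum_meas:
  "(\<lambda>l. Pnum N \<beta> u v (\<lambda>j. l j - a)) \<in> borel_measurable (PiM {1..N} (\<lambda>_. lborel))"
proof -
  let ?P = "PiM {1..N} (\<lambda>_. lborel :: real measure)"
  interpret Pf: finite_product_sigma_finite "\<lambda>_. lborel :: real measure" "{1..N}" by standard simp
  have "(\<lambda>p. ennreal (Vfun N u v (\<lambda>j. fst p j - a) (snd p) * LGRW N \<beta> (\<lambda>j. fst p j - a) (snd p)))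
      \<in> borel_measurable (?P \<Otimes>\<^sub>M ?P)"
    unfolding Vfun_def LGRW_def path0_def by measurable
  from Pf.borel_measurable_nn_integral_fst[OF this] show ?thesis
    unfolding Pnum_def by simp
qed


theorem proposition3p14:
  fixes N :: nat and k :: int and \<alpha> :: "nat \<Rightarrow> real" and u v :: real
    and \<beta> :: "nat \<Rightarrow> real"
  assumes "N \<ge> 1"
    and "\<And>i. i < N \<Longrightarrow> \<alpha> i > 0 \<and> \<alpha> i + u > 0 \<and> \<alpha> i + v > 0"
    and "u + v > 0"
    and "\<And>j. \<beta> j = \<alpha> (nat ((k + int j) mod int N))"
  shows "\<forall>a L. PLG N \<beta> u v a L = PstatLG N \<beta> u v L"
proof (intro allI)
  fix a :: real and L :: "nat \<Rightarrow> real"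
  note N = assms(1) and uv = assms(3)
  have bpos: "\<beta> j > 0 \<and> \<beta> j + u > 0" for j
  proof -
    have "int N > 0" using N by simp
    then have "0 \<le> (k + int j) mod int N" "(k + int j) mod int N < int N" by simp_all
    then have "nat ((k + int j) mod int N) < N" by linarith
    then show ?thesis using assms(2) assms(4)[of j] by simp
  qed
  have b1: "\<beta> 1 + u > 0" using bpos by blast
  have GGpos: "GG N \<beta> > 0" unfolding GG_def using bpos by (intro prod_pos) (auto intro: Gamma_real_pos)
  then have GGnz: "GG N \<beta> \<noteq> 0" by simp
  define c where "c = Gamma (u + v) * (GG N \<beta> * GG N \<beta>)"
  have cpos: "c > 0" unfolding c_def using Gamma_real_pos[OF uv] GGpos by simp
  have main: "wtP N \<beta> u v (\<lambda>j. if j = 0 then a' else a' + L' j) = ennreal c * Pnum N \<beta> u v L'" for a' L'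
    unfolding c_def by (rule main_identity[OF N b1 uv GGnz])
  let ?P = "PiM {1..N} (\<lambda>_. lborel :: real measure)"
  have Z: "ZLG N \<beta> u v a = ennreal c * EV N \<beta> u v"
  proof -
    have "ZLG N \<beta> u v a = (\<integral>\<^sup>+l. ennreal c * Pnum N \<beta> u v (\<lambda>j. l j - a) \<partial>?P)"
      unfolding ZLG_def
    proof (rule nn_integral_cong)
      fix l :: "nat \<Rightarrow> real"
      have "l(0 := a) = (\<lambda>j. if j = 0 then a else a + (l j - a))" by auto
      then show "wtP N \<beta> u v (l(0 := a)) = ennreal c * Pnum N \<beta> u v (\<lambda>j. l j - a)"
        using main by simp
    qed
    also have "\<dots> = (\<integral>\<^sup>+L. ennreal c * Pnum N \<beta> u v (\<lambda>j. (\<lambda>i\<in>{1..N}. L i + a) j - a) \<partial>?P)"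
      by (rule PiM_lborel_shift[symmetric]) (use Pnum_meas in auto)
    also have "\<dots> = (\<integral>\<^sup>+L. ennreal c * Pnum N \<beta> u v L \<partial>?P)"
      by (intro nn_integral_cong arg_cong2[where f="(*)"] refl Pnum_cong[OF N]) auto
    also have "\<dots> = ennreal c * (\<integral>\<^sup>+L. Pnum N \<beta> u v L \<partial>?P)"
      by (rule nn_integral_cmult) (use Pnum_meas[of N \<beta> u v 0] in simp)
    also have "(\<integral>\<^sup>+L. Pnum N \<beta> u v L \<partial>?P) = EV N \<beta> u v"
      unfolding EV_def Pnum_def ..
    finally show ?thesis .
  qed
  have "PLG N \<beta> u v a L = (Pnum N \<beta> u v L * ennreal c) / (EV N \<beta> u v * ennreal c)"
    unfolding PLG_def main Z by (simp add: mult.commute)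
  also have "\<dots> = Pnum N \<beta> u v L / EV N \<beta> u v"
    by (rule divide_mult_eq) (use cpos in auto)
  also have "\<dots> = PstatLG N \<beta> u v L"
    unfolding PstatLG_def Pnum_def ..
  finally show "PLG N \<beta> u v a L = PstatLG N \<beta> u v L" .
qed

end
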